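(* Let $G$ be a $k$-monotone bipartite $\epsilon$-expander with ordered bipartition $A=(v_1,\dots,v_n)$ and $B=(w_1,\dots,w_m)$ (so $n=m$). Let $G'$ be the graph with $V(G')=V(G)$ and $E(G')=\{v_iw_j,\ v_jw_i : v_iw_j\in E(G)\}$. Then $G'$ is a two-sided $2k$-monotone bipartite $\epsilon$-expander (with respect to the same ordered bipartition).
   Context: For $\epsilon\in(0,1]$, a bipartite graph $G$ with bipartition $A,B$ is a bipartite $\epsilon$-expander if $|A|=|B|$ and $|N(S)|\geq(1+\epsilon)|S|$ for every $S\subset A$ with $|S|\leq|A|/2$, where $N(S)$ is the set of vertices adjacent to some vertex of $S$. It is a two-sided bipartite $\epsilon$-expander if additionally $|N(T)|\geq(1+\epsilon)|T|$ for every $T\subset B$ with $|T|\leq|B|/2$. For a bipartite graph with ordered colour classes $(v_1,\dots,v_n)$ and $(w_1,\dots,w_m)$, edges $v_iw_j$ and $v_kw_\ell$ cross if $i<k$ and $\ell<j$; a matching is monotone if no two of its edges cross; the graph is $d$-monotone if its edge set is the union of $d$ monotone matchings. *)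

theory Defs
  imports Complex_Main
begin

text \<open>A bipartite graph with ordered colour classes A = (v_0,...,v_{n-1}) and
  B = (w_0,...,w_{m-1}) is represented by its edge set E :: (nat \<times> nat) set,
  where (i,j) \<in> E means that v_i w_j is an edge; we require E \<subseteq> {..<n} \<times> {..<m}.\<close>

definition bip_graph :: "nat \<Rightarrow> nat \<Rightarrow> (nat \<times> nat) set \<Rightarrow> bool" where
  "bip_graph n m E \<longleftrightarrow> E \<subseteq> {..<n} \<times> {..<m}"

definition nbhdA :: "(nat \<times> nat) set \<Rightarrow> nat set \<Rightarrow> nat set" where
  "nbhdA E S = {j. \<exists>i\<in>S. (i, j) \<in> E}"

definition nbhdB :: "(nat \<times> nat) set \<Rightarrow> nat set \<Rightarrow> nat set" where
  "nbhdB E T = {i. \<exists>j\<in>T. (i, j) \<in> E}"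

definition bip_expander :: "real \<Rightarrow> nat \<Rightarrow> nat \<Rightarrow> (nat \<times> nat) set \<Rightarrow> bool" where
  "bip_expander \<epsilon> n m E \<longleftrightarrow> bip_graph n m E \<and> n = m \<and>
     (\<forall>S. S \<subseteq> {..<n} \<and> real (card S) \<le> real n / 2 \<longrightarrow>
          real (card (nbhdA E S)) \<ge> (1 + \<epsilon>) * real (card S))"

definition two_sided_bip_expander :: "real \<Rightarrow> nat \<Rightarrow> nat \<Rightarrow> (nat \<times> nat) set \<Rightarrow> bool" where
  "two_sided_bip_expander \<epsilon> n m E \<longleftrightarrow> bip_expander \<epsilon> n m E \<and>
     (\<forall>T. T \<subseteq> {..<m} \<and> real (card T) \<le> real m / 2 \<longrightarrow>
          real (card (nbhdB E T)) \<ge> (1 + \<epsilon>) * real (card T))"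

definition edges_cross :: "nat \<times> nat \<Rightarrow> nat \<times> nat \<Rightarrow> bool" where
  "edges_cross e f \<longleftrightarrow> fst e < fst f \<and> snd f < snd e"

definition matching :: "(nat \<times> nat) set \<Rightarrow> bool" where
  "matching M \<longleftrightarrow> (\<forall>e\<in>M. \<forall>f\<in>M. e \<noteq> f \<longrightarrow> fst e \<noteq> fst f \<and> snd e \<noteq> snd f)"

definition monotone_matching :: "(nat \<times> nat) set \<Rightarrow> bool" where
  "monotone_matching M \<longleftrightarrow> matching M \<and> (\<forall>e\<in>M. \<forall>f\<in>M. \<not> edges_cross e f)"

definition d_monotone :: "nat \<Rightarrow> (nat \<times> nat) set \<Rightarrow> bool" where
  "d_monotone d E \<longleftrightarrow>
     (\<exists>Ms :: nat \<Rightarrow> (nat \<times> nat) set. (\<forall>t<d. monotone_matching (Ms t)) \<and> E = (\<Union>t<d. Ms t))"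

definition symmetrise :: "(nat \<times> nat) set \<Rightarrow> (nat \<times> nat) set" where
  "symmetrise E = E \<union> {(j, i) | i j. (i, j) \<in> E}"

end

theory Submission
  imports Defs
begin

lemma swap_mm:
  assumes "monotone_matching M"
  shows "monotone_matching ((\<lambda>(i,j). (j,i)) ` M)"
  unfolding monotone_matching_def matching_def edges_cross_def
proof (intro conjI ballI impI)
  fix e f assume e: "e \<in> (\<lambda>(i,j). (j,i)) ` M" and f: "f \<in> (\<lambda>(i,j). (j,i)) ` M"
  obtain a b where ab: "(a,b) \<in> M" "e = (b,a)" using e by auto
  obtain c d where cd: "(c,d) \<in> M" "f = (d,c)" using f by auto
  have mm: "\<forall>x\<in>M. \<forall>y\<in>M. x \<noteq> y \<longrightarrow> fst x \<noteq> fst y \<and> snd x \<noteq> snd y"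
    "\<forall>x\<in>M. \<forall>y\<in>M. \<not> (fst x < fst y \<and> snd y < snd x)"
    using assms unfolding monotone_matching_def matching_def edges_cross_def by auto
  have "\<not> (c < a \<and> b < d)" using mm(2) ab cd by fastforce
  then show "\<not> (fst e < fst f \<and> snd f < snd e)" using ab cd by auto
  { assume "e \<noteq> f"
    then have "(a,b) \<noteq> (c,d)" using ab cd by auto
    then have "a \<noteq> c \<and> b \<noteq> d" using mm(1) ab cd by fastforce
    then show "fst e \<noteq> fst f" "snd e \<noteq> snd f" using ab cd by auto }
qed

lemma sym_eq: "symmetrise E = E \<union> (\<lambda>(i,j). (j,i)) ` E"
  unfolding symmetrise_def by auto

theorem lemma6:
  fixes \<epsilon> :: real and k n m :: nat and E :: "(nat \<times> nat) set"
  assumes "0 < \<epsilon>" and "\<epsilon> \<le> 1"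
    and "bip_expander \<epsilon> n m E"
    and "d_monotone k E"
  shows "two_sided_bip_expander \<epsilon> n m (symmetrise E) \<and> d_monotone (2 * k) (symmetrise E)"
proof
  have g: "E \<subseteq> {..<n} \<times> {..<n}" and nm: "n = m"
    and ex: "\<And>S. S \<subseteq> {..<n} \<Longrightarrow> real (card S) \<le> real n / 2 \<Longrightarrow>
          real (card (nbhdA E S)) \<ge> (1 + \<epsilon>) * real (card S)"
    using assms(3) unfolding bip_expander_def bip_graph_def by auto
  have g': "symmetrise E \<subseteq> {..<n} \<times> {..<n}" using g unfolding symmetrise_def by auto
  show "two_sided_bip_expander \<epsilon> n m (symmetrise E)"
    unfolding two_sided_bip_expander_def bip_expander_def bip_graph_def
  proof (intro conjI allI impI)
    show "symmetrise E \<subseteq> {..<n} \<times> {..<m}" using g' nm by simp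
    show "n = m" by fact
  next
    fix S assume S: "S \<subseteq> {..<n} \<and> real (card S) \<le> real n / 2"
    have "nbhdA E S \<subseteq> nbhdA (symmetrise E) S"
      unfolding nbhdA_def symmetrise_def by auto
    moreover have "finite (nbhdA (symmetrise E) S)"
      by (rule finite_subset[of _ "{..<n}"]) (use g' in \<open>auto simp: nbhdA_def\<close>)
    ultimately have "card (nbhdA E S) \<le> card (nbhdA (symmetrise E) S)"
      by (rule card_mono[rotated])
    with ex[of S] S show "(1 + \<epsilon>) * real (card S) \<le> real (card (nbhdA (symmetrise E) S))"
      by linarith
  next
    fix T assume T: "T \<subseteq> {..<m} \<and> real (card T) \<le> real m / 2"
    have "nbhdA E T \<subseteq> nbhdB (symmetrise E) T"
      unfolding nbhdA_def nbhdB_def symmetrise_def by auto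
    moreover have "finite (nbhdB (symmetrise E) T)"
      by (rule finite_subset[of _ "{..<n}"]) (use g' in \<open>auto simp: nbhdB_def\<close>)
    ultimately have "card (nbhdA E T) \<le> card (nbhdB (symmetrise E) T)"
      by (rule card_mono[rotated])
    with ex[of T] T nm show "(1 + \<epsilon>) * real (card T) \<le> real (card (nbhdB (symmetrise E) T))"
      by auto
  qed
next
  obtain Ms where Ms: "\<forall>t<k. monotone_matching (Ms t)" and E: "E = (\<Union>t<k. Ms t)"
    using assms(4) unfolding d_monotone_def by blast
  define Ms' where "Ms' t = (if t < k then Ms t else (\<lambda>(i,j). (j,i)) ` Ms (t - k))" for t
  have "\<forall>t<2*k. monotone_matching (Ms' t)"
    using Ms swap_mm unfolding Ms'_def by auto
  moreover have "symmetrise E = (\<Union>t<2*k. Ms' t)"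
  proof
    show "symmetrise E \<subseteq> (\<Union>t<2*k. Ms' t)"
    proof
      fix x assume "x \<in> symmetrise E"
      then consider "x \<in> E" | "x \<in> (\<lambda>(i,j). (j,i)) ` E" unfolding sym_eq by blast
      then show "x \<in> (\<Union>t<2*k. Ms' t)"
      proof cases
        case 1 then obtain t where "t < k" "x \<in> Ms t" using E by auto
        then show ?thesis unfolding Ms'_def by (intro UN_I[of t]) auto
      next
        case 2 then obtain y t where "t < k" "y \<in> Ms t" "x = (\<lambda>(i,j). (j,i)) y" using E by auto
        then show ?thesis unfolding Ms'_def by (intro UN_I[of "t+k"]) auto
      qed
    qed
    show "(\<Union>t<2*k. Ms' t) \<subseteq> symmetrise E"
    proof
      fix x assume "x \<in> (\<Union>t<2*k. Ms' t)"
      then obtain t where t: "t < 2*k" "x \<in> Ms' t" by auto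
      show "x \<in> symmetrise E"
      proof (cases "t < k")
        case True then show ?thesis using t E unfolding Ms'_def sym_eq by auto
      next
        case False
        then have "t - k < k" using t by auto
        then have "x \<in> (\<lambda>(i,j). (j,i)) ` Ms (t - k)" using t False unfolding Ms'_def by simp
        moreover have "Ms (t - k) \<subseteq> E" using E \<open>t - k < k\<close> by auto
        ultimately show ?thesis unfolding sym_eq by blast
      qed
    qed
  qed
  ultimately show "d_monotone (2 * k) (symmetrise E)" unfolding d_monotone_def by blast
qed

end
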